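(* Let $\mathcal{H}$ be an $n$-dimensional (real or complex) Hilbert space, let $F=\{f_i\}_{i=1}^N$ be a tight frame for $\mathcal{H}$, and let $\{q_i\}_{i=1}^N$ be the weight number sequence associated with a probability sequence $\{p_i\}_{i=1}^N$. Then the canonical dual $S_F^{-1}F$ is a 1-erasure probabilistic optimal dual (POD) of $F$ if and only if $S_F^{-1}F\in\Delta_F^{(1)}$.
   Context: A finite sequence $F=\{f_i\}_{i=1}^N$ in $\mathcal{H}$ is a frame if there are $A,B>0$ with $A\|f\|^2\le\sum_{i=1}^N|\langle f,f_i\rangle|^2\le B\|f\|^2$ for all $f$; it is tight if one can take $A=B$. The frame operator is $S_Ff=\sum_{i=1}^N\langle f,f_i\rangle f_i$ and the canonical dual is $S_F^{-1}F=\{S_F^{-1}f_i\}_{i=1}^N$. A frame $G=\{g_i\}_{i=1}^N$ is a dual of $F$ if $f=\sum_i\langle f,f_i\rangle g_i=\sum_i\langle f,g_i\rangle f_i$ for all $f$. A probability sequence is $\{p_i\}_{i=1}^N$ with $0\le p_i\le1$, $\sum p_i=1$; weight numbers $q_i=\frac{\sum_{j} p_j}{\sum_{j} p_j-p_i}\cdot\frac{N-1}{n}$. For $\Lambda\subseteq\{1,\dots,N\}$ the error operator is $E_{\Lambda,(F,G)}f=\sum_{i\in\Lambda}q_i\langle f,f_i\rangle g_i$. Set $\mathcal{O}_P^{(1)}(F,G)=\max_{|\Lambda|=1}\|E_{\Lambda,(F,G)}\|$ and $\mathcal{A}_P^{(1)}(F,G)=\max_{|\Lambda|=1}\frac{\|E_{\Lambda,(F,G)}\|+\rho(E_{\Lambda,(F,G)})}{2}$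 ($\rho$ = spectral radius). A dual $G$ of $F$ is a 1-erasure POD of $F$ if $\mathcal{O}_P^{(1)}(F,G)=\min\{\mathcal{O}_P^{(1)}(F,G'):G'\text{ a dual of }F\}$. $\Delta_F^{(1)}$ is the set of duals $G$ of $F$ minimizing $\mathcal{A}_P^{(1)}(F,G)$ over all duals of $F$ (1-erasure PASOD-frames). *)

theory Defs
  imports "Jordan_Normal_Form.Spectral_Radius"
begin

text \<open>The n-dimensional Hilbert space over the scalar field K (K = reals, embedded in
  the complex numbers, or K = all complex numbers) is modelled as K^n inside
  complex n-vectors, with the standard inner product (linear in the first argument).
  Finite sequences are indexed by 0..N-1.\<close>

definition hspace :: "complex set \<Rightarrow> nat \<Rightarrow> complex vec set" where
  "hspace K n = {v \<in> carrier_vec n. \<forall>i<n. v $ i \<in> K}"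

definition inner :: "complex vec \<Rightarrow> complex vec \<Rightarrow> complex" where
  "inner f g = f \<bullet>c g"

definition vnorm :: "complex vec \<Rightarrow> real" where
  "vnorm v = sqrt (\<Sum>i<dim_vec v. (cmod (v $ i))\<^sup>2)"

definition is_frame :: "complex set \<Rightarrow> nat \<Rightarrow> nat \<Rightarrow> (nat \<Rightarrow> complex vec) \<Rightarrow> bool" where
  "is_frame K n N F \<longleftrightarrow> (\<forall>i<N. F i \<in> hspace K n) \<and>
     (\<exists>A B. A > 0 \<and> B > 0 \<and> (\<forall>f \<in> hspace K n.
        A * (vnorm f)\<^sup>2 \<le> (\<Sum>i<N. (cmod (inner f (F i)))\<^sup>2) \<and>
        (\<Sum>i<N. (cmod (inner f (F i)))\<^sup>2) \<le> B * (vnorm f)\<^sup>2))"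

definition is_tight_frame :: "complex set \<Rightarrow> nat \<Rightarrow> nat \<Rightarrow> (nat \<Rightarrow> complex vec) \<Rightarrow> bool" where
  "is_tight_frame K n N F \<longleftrightarrow> (\<forall>i<N. F i \<in> hspace K n) \<and>
     (\<exists>A. A > 0 \<and> (\<forall>f \<in> hspace K n.
        A * (vnorm f)\<^sup>2 \<le> (\<Sum>i<N. (cmod (inner f (F i)))\<^sup>2) \<and>
        (\<Sum>i<N. (cmod (inner f (F i)))\<^sup>2) \<le> A * (vnorm f)\<^sup>2))"

text \<open>Frame operator S_F f = sum_i <f,f_i> f_i, as an n x n matrix.\<close>
definition frame_op :: "nat \<Rightarrow> nat \<Rightarrow> (nat \<Rightarrow> complex vec) \<Rightarrow> complex mat" where
  "frame_op n N F = mat n n (\<lambda>(j,k). \<Sum>i<N. F i $ j * cnj (F i $ k))"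

definition inv_op :: "nat \<Rightarrow> complex mat \<Rightarrow> complex mat" where
  "inv_op n S = (THE M. M \<in> carrier_mat n n \<and> S * M = 1\<^sub>m n \<and> M * S = 1\<^sub>m n)"

definition canonical_dual :: "nat \<Rightarrow> nat \<Rightarrow> (nat \<Rightarrow> complex vec) \<Rightarrow> nat \<Rightarrow> complex vec" where
  "canonical_dual n N F = (\<lambda>i. inv_op n (frame_op n N F) *\<^sub>v F i)"

definition is_dual :: "complex set \<Rightarrow> nat \<Rightarrow> nat \<Rightarrow> (nat \<Rightarrow> complex vec) \<Rightarrow> (nat \<Rightarrow> complex vec) \<Rightarrow> bool" where
  "is_dual K n N F G \<longleftrightarrow> is_frame K n N G \<and>
     (\<forall>f \<in> hspace K n.
        f = finsum_vec TYPE(complex) n (\<lambda>i. inner f (F i) \<cdot>\<^sub>v G i) {..<N} \<and>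
        f = finsum_vec TYPE(complex) n (\<lambda>i. inner f (G i) \<cdot>\<^sub>v F i) {..<N})"

definition prob_seq :: "nat \<Rightarrow> (nat \<Rightarrow> real) \<Rightarrow> bool" where
  "prob_seq N p \<longleftrightarrow> (\<forall>i<N. 0 \<le> p i \<and> p i \<le> 1) \<and> (\<Sum>i<N. p i) = 1"

definition weight :: "nat \<Rightarrow> nat \<Rightarrow> (nat \<Rightarrow> real) \<Rightarrow> nat \<Rightarrow> real" where
  "weight n N p i = (\<Sum>j<N. p j) / ((\<Sum>j<N. p j) - p i) * ((real N - 1) / real n)"

text \<open>Error operator E_{Lambda,(F,G)} f = sum_{i in Lambda} q_i <f,f_i> g_i, as a matrix.\<close>
definition err_op :: "nat \<Rightarrow> nat \<Rightarrow> (nat \<Rightarrow> real) \<Rightarrow> nat set \<Rightarrow> (nat \<Rightarrow> complex vec) \<Rightarrow> (nat \<Rightarrow> complex vec) \<Rightarrow> complex mat" where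
  "err_op n N p \<Lambda> F G = mat n n (\<lambda>(j,k). \<Sum>i\<in>\<Lambda>. complex_of_real (weight n N p i) * G i $ j * cnj (F i $ k))"

definition op_norm :: "complex set \<Rightarrow> nat \<Rightarrow> complex mat \<Rightarrow> real" where
  "op_norm K n T = Sup {vnorm (T *\<^sub>v f) | f. f \<in> hspace K n \<and> vnorm f \<le> 1}"

definition O1 :: "complex set \<Rightarrow> nat \<Rightarrow> nat \<Rightarrow> (nat \<Rightarrow> real) \<Rightarrow> (nat \<Rightarrow> complex vec) \<Rightarrow> (nat \<Rightarrow> complex vec) \<Rightarrow> real" where
  "O1 K n N p F G = Max {op_norm K n (err_op n N p \<Lambda> F G) | \<Lambda>. \<Lambda> \<subseteq> {..<N} \<and> card \<Lambda> = 1}"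

definition A1 :: "complex set \<Rightarrow> nat \<Rightarrow> nat \<Rightarrow> (nat \<Rightarrow> real) \<Rightarrow> (nat \<Rightarrow> complex vec) \<Rightarrow> (nat \<Rightarrow> complex vec) \<Rightarrow> real" where
  "A1 K n N p F G = Max {(op_norm K n (err_op n N p \<Lambda> F G) + spectral_radius (err_op n N p \<Lambda> F G)) / 2
                         | \<Lambda>. \<Lambda> \<subseteq> {..<N} \<and> card \<Lambda> = 1}"

definition is_1_erasure_POD :: "complex set \<Rightarrow> nat \<Rightarrow> nat \<Rightarrow> (nat \<Rightarrow> real) \<Rightarrow> (nat \<Rightarrow> complex vec) \<Rightarrow> (nat \<Rightarrow> complex vec) \<Rightarrow> bool" where
  "is_1_erasure_POD K n N p F G \<longleftrightarrow> is_dual K n N F G \<and>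
     (\<forall>G'. is_dual K n N F G' \<longrightarrow> O1 K n N p F G \<le> O1 K n N p F G')"

definition Delta1 :: "complex set \<Rightarrow> nat \<Rightarrow> nat \<Rightarrow> (nat \<Rightarrow> real) \<Rightarrow> (nat \<Rightarrow> complex vec) \<Rightarrow> (nat \<Rightarrow> complex vec) set" where
  "Delta1 K n N p F = {G. is_dual K n N F G \<and>
     (\<forall>G'. is_dual K n N F G' \<longrightarrow> A1 K n N p F G \<le> A1 K n N p F G')}"

end

theory Submission
  imports Defs
begin

lemma inner_sum: assumes "g \<in> carrier_vec n"
  shows "inner f g = (\<Sum>l<n. f $ l * cnj (g $ l))"
  using assms unfolding inner_def scalar_prod_def
  by (auto simp: atLeast0LessThan)

lemma vnorm_sq: assumes "v \<in> carrier_vec n"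
  shows "(vnorm v)\<^sup>2 = (\<Sum>l<n. (cmod (v $ l))\<^sup>2)"
  using assms unfolding vnorm_def by (simp add: sum_nonneg)

lemma vnorm_nonneg: "vnorm v \<ge> 0"
  unfolding vnorm_def by (simp add: sum_nonneg)

lemma real_CS_sqrt:
  fixes a b :: "nat \<Rightarrow> real"
  shows "(\<Sum>i\<in>I. a i * b i) \<le> sqrt (\<Sum>i\<in>I. (a i)\<^sup>2) * sqrt (\<Sum>i\<in>I. (b i)\<^sup>2)"
proof -
  have CS: "(\<Sum>i\<in>I. a i * b i)\<^sup>2 \<le> (\<Sum>i\<in>I. (a i)\<^sup>2) * (\<Sum>i\<in>I. (b i)\<^sup>2)"
  proof (cases "(\<Sum>i\<in>I. (b i)\<^sup>2) > 0")
    case False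
    then consider "\<And>i. i\<in>I \<Longrightarrow> b i = 0" | "infinite I"
      by (metis (mono_tags, lifting) sum_pos2 zero_le_power2 zero_less_power2)
    thus ?thesis
      by fastforce
  next
    case True
    define r where "r \<equiv> (\<Sum>i\<in>I. a i * b i) / (\<Sum>i\<in>I. (b i)\<^sup>2)"
    have "0 \<le> (\<Sum>i\<in>I. (a i - r * b i)\<^sup>2)"
      by (simp add: sum_nonneg)
    also have "... = (\<Sum>i\<in>I. (a i)\<^sup>2 - 2 * r * (a i * b i) + r\<^sup>2 * (b i)\<^sup>2)"
      by (rule sum.cong, simp, simp add: power2_eq_square algebra_simps)
    also have "... = (\<Sum>i\<in>I. (a i)\<^sup>2) - 2 * r * (\<Sum>i\<in>I. a i * b i) + r\<^sup>2 * (\<Sum>i\<in>I. (b i)\<^sup>2)"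
      by (simp add: sum.distrib sum_subtractf sum_distrib_left)
    also have "\<dots> = (\<Sum>i\<in>I. (a i)\<^sup>2) - ((\<Sum>i\<in>I. a i * b i))\<^sup>2 / (\<Sum>i\<in>I. (b i)\<^sup>2)"
      by (simp add: r_def power2_eq_square)
    finally have "0 \<le> (\<Sum>i\<in>I. (a i)\<^sup>2) - ((\<Sum>i\<in>I. a i * b i))\<^sup>2 / (\<Sum>i\<in>I. (b i)\<^sup>2)" .
    hence "((\<Sum>i\<in>I. a i * b i))\<^sup>2 / (\<Sum>i\<in>I. (b i)\<^sup>2) \<le> (\<Sum>i\<in>I. (a i)\<^sup>2)"
      by (simp add: le_diff_eq)
    thus ?thesis
      by (simp add: pos_divide_le_eq True)
  qed
  have "(\<Sum>i\<in>I. a i * b i) \<le> sqrt ((\<Sum>i\<in>I. (a i)\<^sup>2) * (\<Sum>i\<in>I. (b i)\<^sup>2))"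
    using CS real_le_rsqrt by blast
  thus ?thesis by (simp add: real_sqrt_mult)
qed

lemma CS_inner: assumes "f \<in> carrier_vec n" "g \<in> carrier_vec n"
  shows "cmod (inner f g) \<le> vnorm f * vnorm g"
proof -
  have "cmod (inner f g) \<le> (\<Sum>l<n. cmod (f $ l * cnj (g $ l)))"
    unfolding inner_sum[OF assms(2)] by (rule norm_sum)
  also have "\<dots> = (\<Sum>l<n. cmod (f $ l) * cmod (g $ l))"
    by (simp add: norm_mult)
  also have "\<dots> \<le> sqrt (\<Sum>l<n. (cmod (f $ l))\<^sup>2) * sqrt (\<Sum>l<n. (cmod (g $ l))\<^sup>2)"
    by (rule real_CS_sqrt)
  also have "\<dots> = vnorm f * vnorm g"
    using assms unfolding vnorm_def by simp
  finally show ?thesis .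
qed

lemma inner_self: assumes "v \<in> carrier_vec n"
  shows "inner v v = complex_of_real ((vnorm v)\<^sup>2)"
proof -
  have "inner v v = (\<Sum>l<n. complex_of_real ((cmod (v $ l))\<^sup>2))"
    unfolding inner_sum[OF assms] by (rule sum.cong[OF refl], rule complex_norm_square[symmetric])
  also have "\<dots> = complex_of_real ((vnorm v)\<^sup>2)"
    unfolding vnorm_sq[OF assms] by simp
  finally show ?thesis .
qed

lemma vnorm_smult: assumes "u \<in> carrier_vec n"
  shows "vnorm (a \<cdot>\<^sub>v u) = cmod a * vnorm u"
proof -
  have "vnorm (a \<cdot>\<^sub>v u) = sqrt ((cmod a)\<^sup>2 * (\<Sum>l<n. (cmod (u $ l))\<^sup>2))"
    using assms unfolding vnorm_def by (simp add: norm_mult power_mult_distrib sum_distrib_left)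
  also have "\<dots> = cmod a * vnorm u"
    using assms unfolding vnorm_def by (simp add: real_sqrt_mult)
  finally show ?thesis .
qed

definition R1 :: "nat \<Rightarrow> complex vec \<Rightarrow> complex vec \<Rightarrow> complex mat" where
  "R1 n u v = mat n n (\<lambda>(j,k). u $ j * cnj (v $ k))"

lemma R1_mult: assumes "x \<in> carrier_vec n" "v \<in> carrier_vec n" "u \<in> carrier_vec n"
  shows "R1 n u v *\<^sub>v x = inner x v \<cdot>\<^sub>v u"
proof (rule eq_vecI)
  show "dim_vec (R1 n u v *\<^sub>v x) = dim_vec (inner x v \<cdot>\<^sub>v u)" using assms by (simp add: R1_def)
  fix j assume "j < dim_vec (inner x v \<cdot>\<^sub>v u)"
  hence j: "j < n" using assms by simp
  have "(R1 n u v *\<^sub>v x) $ j = (\<Sum>l<n. u $ j * cnj (v $ l) * x $ l)"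
    using assms j unfolding R1_def by (simp add: mult_mat_vec_def scalar_prod_def atLeast0LessThan)
  also have "\<dots> = inner x v * u $ j"
    unfolding inner_sum[OF assms(2)] by (simp add: sum_distrib_left sum_distrib_right mult_ac)
  finally show "(R1 n u v *\<^sub>v x) $ j = (inner x v \<cdot>\<^sub>v u) $ j" using j assms by simp
qed


lemma inner_smult_left: assumes "g \<in> carrier_vec n" "f \<in> carrier_vec n"
  shows "inner (a \<cdot>\<^sub>v f) g = a * inner f g"
  using assms unfolding inner_sum[OF assms(1)] by (simp add: sum_distrib_left mult.assoc)

lemma R1_carrier: "R1 n u v \<in> carrier_mat n n"
  unfolding R1_def by simp

lemma hspace_carrier: "f \<in> hspace K n \<Longrightarrow> f \<in> carrier_vec n"
  unfolding hspace_def by auto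

lemma hspace_smult_real: assumes K: "K = \<real> \<or> K = UNIV" and f: "f \<in> hspace K n"
  shows "complex_of_real c \<cdot>\<^sub>v f \<in> hspace K n"
  using K f unfolding hspace_def by auto

lemma op_norm_R1: assumes K: "K = \<real> \<or> K = UNIV" and u: "u \<in> hspace K n" and v: "v \<in> hspace K n"
  shows "op_norm K n (R1 n u v) = vnorm u * vnorm v"
proof -
  have uc: "u \<in> carrier_vec n" and vc: "v \<in> carrier_vec n" using u v hspace_carrier by auto
  let ?S = "{vnorm (R1 n u v *\<^sub>v f) | f. f \<in> hspace K n \<and> vnorm f \<le> 1}"
  have val: "vnorm (R1 n u v *\<^sub>v f) = cmod (inner f v) * vnorm u" if "f \<in> carrier_vec n" for f
    using R1_mult[OF that vc uc] vnorm_smult[OF uc] by simp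
  show ?thesis unfolding op_norm_def
  proof (rule cSup_eq_maximum)
    show "vnorm u * vnorm v \<in> ?S"
    proof (cases "vnorm v = 0")
      case True
      have "0\<^sub>v n \<in> hspace K n" unfolding hspace_def using K by auto
      moreover have "vnorm (0\<^sub>v n) = 0" unfolding vnorm_def by simp
      moreover have "inner (0\<^sub>v n) v = 0" unfolding inner_sum[OF vc] by simp
      ultimately show ?thesis using True val[of "0\<^sub>v n"] by force
    next
      case False
      hence pos: "vnorm v > 0" using vnorm_nonneg[of v] by simp
      define f where "f = complex_of_real (1 / vnorm v) \<cdot>\<^sub>v v"
      have fh: "f \<in> hspace K n" unfolding f_def by (rule hspace_smult_real[OF K v])
      have fn: "vnorm f = 1" unfolding f_def vnorm_smult[OF vc] using pos by (simp add: norm_divide)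
      have "inner f v = complex_of_real (1 / vnorm v) * complex_of_real ((vnorm v)\<^sup>2)"
        unfolding f_def inner_smult_left[OF vc vc] inner_self[OF vc] ..
      also have "\<dots> = complex_of_real (vnorm v)" using pos by (simp add: power2_eq_square)
      finally have "cmod (inner f v) = vnorm v" using pos by simp
      hence "vnorm (R1 n u v *\<^sub>v f) = vnorm u * vnorm v"
        using val[OF hspace_carrier[OF fh]] by simp
      thus ?thesis using fh fn by force
    qed
  next
    fix x assume "x \<in> ?S"
    then obtain f where fh: "f \<in> hspace K n" and fn: "vnorm f \<le> 1" and x: "x = vnorm (R1 n u v *\<^sub>v f)"
      by blast
    have fc: "f \<in> carrier_vec n" using hspace_carrier[OF fh] .
    have "x = cmod (inner f v) * vnorm u" using x val[OF fc] by simp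
    also have "\<dots> \<le> (vnorm f * vnorm v) * vnorm u"
      by (rule mult_right_mono[OF CS_inner[OF fc vc] vnorm_nonneg])
    also have "\<dots> \<le> (1 * vnorm v) * vnorm u"
      by (intro mult_right_mono fn vnorm_nonneg)
    finally show "x \<le> vnorm u * vnorm v" by (simp add: mult.commute)
  qed
qed

lemma spec_R1: assumes uc: "u \<in> carrier_vec n" and vc: "v \<in> carrier_vec n" and n: "n > 0"
  shows "cmod (inner u v) \<le> spectral_radius (R1 n u v)"
    and "spectral_radius (R1 n u v) \<le> vnorm u * vnorm v"
proof -
  note M = spectral_radius_mem_max[OF R1_carrier[of n u v] n]
  show "cmod (inner u v) \<le> spectral_radius (R1 n u v)"
  proof (cases "inner u v = 0")
    case True
    from M(1) obtain l :: complex where "spectral_radius (R1 n u v) = cmod l" by blast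
    thus ?thesis using True by simp
  next
    case False
    have "u \<noteq> 0\<^sub>v n"
    proof
      assume "u = 0\<^sub>v n"
      hence "inner u v = 0" unfolding inner_sum[OF vc] by simp
      thus False using False by simp
    qed
    hence "eigenvector (R1 n u v) u (inner u v)"
      unfolding eigenvector_def using uc R1_mult[OF uc vc uc] by (simp add: R1_def)
    hence "inner u v \<in> spectrum (R1 n u v)"
      unfolding spectrum_def eigenvalue_def by auto
    thus ?thesis using M(2) by auto
  qed
  from M(1) obtain l where sr: "spectral_radius (R1 n u v) = norm l" and lsp: "l \<in> spectrum (R1 n u v)"
    by auto
  then obtain x where ev: "eigenvector (R1 n u v) x l" unfolding spectrum_def eigenvalue_def by auto
  hence xc: "x \<in> carrier_vec n" and xnz: "x \<noteq> 0\<^sub>v n" and eq: "R1 n u v *\<^sub>v x = l \<cdot>\<^sub>v x"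
    unfolding eigenvector_def by (auto simp: R1_def)
  have eq2: "inner x v \<cdot>\<^sub>v u = l \<cdot>\<^sub>v x" using eq R1_mult[OF xc vc uc] by simp
  have comp: "inner x v * u $ j = l * x $ j" if "j < n" for j
  proof -
    have "(inner x v \<cdot>\<^sub>v u) $ j = (l \<cdot>\<^sub>v x) $ j" using eq2 by simp
    thus ?thesis using that uc xc by simp
  qed
  show "spectral_radius (R1 n u v) \<le> vnorm u * vnorm v"
  proof (cases "l = 0")
    case True
    thus ?thesis using sr vnorm_nonneg[of u] vnorm_nonneg[of v] by simp
  next
    case False
    have "inner x v * inner u v = (\<Sum>j<n. (inner x v * u $ j) * cnj (v $ j))"
      unfolding inner_sum[OF vc] by (simp add: sum_distrib_left mult.assoc)
    also have "\<dots> = (\<Sum>j<n. (l * x $ j) * cnj (v $ j))"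
      by (rule sum.cong, simp, simp add: comp)
    also have "\<dots> = l * inner x v"
      unfolding inner_sum[OF vc] by (simp add: sum_distrib_left mult.assoc)
    finally have e: "inner x v * inner u v = l * inner x v" .
    have "inner x v \<noteq> 0"
    proof
      assume "inner x v = 0"
      hence "\<forall>j<n. x $ j = 0" using comp False by simp
      hence "x = 0\<^sub>v n" using xc by (intro eq_vecI) auto
      thus False using xnz by simp
    qed
    hence "l = inner u v" using e by (simp add: mult.commute)
    thus ?thesis using sr CS_inner[OF uc vc] by simp
  qed
qed


lemma cmod_add_sq: "(cmod (x + y))\<^sup>2 = (cmod x)\<^sup>2 + (cmod y)\<^sup>2 + 2 * Re (x * cnj y)"
  unfolding cmod_power2 by (simp add: power2_eq_square algebra_simps)

lemma cross_sq: assumes "cmod w = 1"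
  shows "(cmod (cnj a + w * cnj b))\<^sup>2 = (cmod a)\<^sup>2 + (cmod b)\<^sup>2 + 2 * Re (cnj w * (b * cnj a))"
  unfolding cmod_add_sq using assms by (simp add: norm_mult mult_ac)

lemma inner_unit_left: assumes "g \<in> carrier_vec n" "j < n"
  shows "inner (unit_vec n j) g = cnj (g $ j)"
  unfolding inner_def using assms by (simp add: scalar_prod_left_unit)

lemma inner_add_left: assumes "g \<in> carrier_vec n" "a \<in> carrier_vec n" "b \<in> carrier_vec n"
  shows "inner (a + b) g = inner a g + inner b g"
  using assms unfolding inner_sum[OF assms(1)] by (simp add: sum.distrib algebra_simps)

lemma tight_eq: assumes "is_tight_frame K n N F"
  obtains A where "A > 0" "\<forall>i<N. F i \<in> hspace K n"
    "\<And>f. f \<in> hspace K n \<Longrightarrow> (\<Sum>i<N. (cmod (inner f (F i)))\<^sup>2) = A * (vnorm f)\<^sup>2"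
proof -
  from assms obtain A where A: "A > 0" and F: "\<forall>i<N. F i \<in> hspace K n" and
    b: "\<forall>f \<in> hspace K n. A * (vnorm f)\<^sup>2 \<le> (\<Sum>i<N. (cmod (inner f (F i)))\<^sup>2) \<and>
        (\<Sum>i<N. (cmod (inner f (F i)))\<^sup>2) \<le> A * (vnorm f)\<^sup>2"
    unfolding is_tight_frame_def by blast
  show ?thesis by (rule that[OF A F], insert b, force)
qed

lemma unit_hspace: assumes K: "K = \<real> \<or> K = UNIV" and j: "j < n"
  shows "unit_vec n j \<in> hspace K n"
  using K j unfolding hspace_def by auto

lemma frame_op_tight:
  assumes K: "K = \<real> \<or> K = UNIV" and A: "A > 0" and F: "\<forall>i<N. F i \<in> hspace K n"
    and eq: "\<And>f. f \<in> hspace K n \<Longrightarrow> (\<Sum>i<N. (cmod (inner f (F i)))\<^sup>2) = A * (vnorm f)\<^sup>2"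
  shows "frame_op n N F = complex_of_real A \<cdot>\<^sub>m 1\<^sub>m n"
proof -
  have Fc: "F i \<in> carrier_vec n" if "i < N" for i using F that hspace_carrier by auto
  have diag: "(\<Sum>i<N. (cmod (F i $ j))\<^sup>2) = A" if j: "j < n" for j
  proof -
    have "vnorm (unit_vec n j) = 1"
    proof -
      have "complex_of_real ((vnorm (unit_vec n j))\<^sup>2) = 1"
        using inner_self[of "unit_vec n j" n] inner_unit_left[of "unit_vec n j" n j] j by simp
      hence "(vnorm (unit_vec n j))\<^sup>2 = 1" by (metis of_real_eq_1_iff)
      thus ?thesis using vnorm_nonneg[of "unit_vec n j"] by (simp add: power2_eq_1_iff)
    qed
    hence "(\<Sum>i<N. (cmod (inner (unit_vec n j) (F i)))\<^sup>2) = A"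
      using eq[OF unit_hspace[OF K j]] by simp
    moreover have "(\<Sum>i<N. (cmod (inner (unit_vec n j) (F i)))\<^sup>2) = (\<Sum>i<N. (cmod (F i $ j))\<^sup>2)"
      by (rule sum.cong, simp, simp add: inner_unit_left[OF Fc j])
    ultimately show ?thesis by simp
  qed
  have polar: "Re (cnj w * (\<Sum>i<N. F i $ j * cnj (F i $ k))) = 0"
    if j: "j < n" and k: "k < n" and jk: "j \<noteq> k" and w: "cmod w = 1"
      and fh: "unit_vec n k + w \<cdot>\<^sub>v unit_vec n j \<in> hspace K n" for j k w
  proof -
    define f where "f = unit_vec n k + w \<cdot>\<^sub>v unit_vec n j"
    have fc: "f \<in> carrier_vec n" unfolding f_def by simp
    have fi: "inner f g = cnj (g $ k) + w * cnj (g $ j)" if "g \<in> carrier_vec n" for g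
      unfolding f_def using that j k
      by (simp add: inner_add_left[OF that] inner_smult_left[OF that] inner_unit_left)
    have "complex_of_real ((vnorm f)\<^sup>2) = cnj (f $ k) + w * cnj (f $ j)"
      using inner_self[OF fc] fi[OF fc] by simp
    also have "\<dots> = 1 + w * cnj w" unfolding f_def using j k jk by simp
    also have "\<dots> = 2" using w by (simp add: complex_norm_square[symmetric])
    finally have vf: "(vnorm f)\<^sup>2 = 2" by (metis of_real_numeral of_real_eq_iff)
    have "(\<Sum>i<N. (cmod (inner f (F i)))\<^sup>2) =
      (\<Sum>i<N. (cmod (F i $ k))\<^sup>2 + (cmod (F i $ j))\<^sup>2 + 2 * Re (cnj w * (F i $ j * cnj (F i $ k))))"
    proof (rule sum.cong[OF refl])
      fix i assume "i \<in> {..<N}"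
      hence "inner f (F i) = cnj (F i $ k) + w * cnj (F i $ j)" using fi Fc by simp
      thus "(cmod (inner f (F i)))\<^sup>2 =
        (cmod (F i $ k))\<^sup>2 + (cmod (F i $ j))\<^sup>2 + 2 * Re (cnj w * (F i $ j * cnj (F i $ k)))"
        using cross_sq[OF w] by simp
    qed
    also have "\<dots> = A + A + 2 * Re (cnj w * (\<Sum>i<N. F i $ j * cnj (F i $ k)))"
      by (simp add: sum.distrib diag[OF j] diag[OF k] sum_distrib_left Re_sum flip: sum_distrib_left)
    finally show ?thesis using eq[OF fh[folded f_def]] vf by simp
  qed
  show ?thesis
  proof (rule eq_matI)
    fix j k assume j: "j < dim_row (complex_of_real A \<cdot>\<^sub>m 1\<^sub>m n)" and k: "k < dim_col (complex_of_real A \<cdot>\<^sub>m 1\<^sub>m n)"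
    hence j: "j < n" and k: "k < n" by auto
    have fo: "frame_op n N F $$ (j, k) = (\<Sum>i<N. F i $ j * cnj (F i $ k))"
      unfolding frame_op_def using j k by simp
    show "frame_op n N F $$ (j, k) = (complex_of_real A \<cdot>\<^sub>m 1\<^sub>m n) $$ (j, k)"
    proof (cases "j = k")
      case True
      have "(\<Sum>i<N. F i $ j * cnj (F i $ j)) = (\<Sum>i<N. complex_of_real ((cmod (F i $ j))\<^sup>2))"
        by (rule sum.cong[OF refl], rule complex_norm_square[symmetric])
      also have "\<dots> = complex_of_real A" unfolding of_real_sum[symmetric] diag[OF j] ..
      finally show ?thesis using fo True j by simp
    next
      case False
      define S where "S = (\<Sum>i<N. F i $ j * cnj (F i $ k))"
      have re: "Re S = 0" using polar[OF j k False, of 1] K unit_hspace[OF K j] unit_hspace[OF K k]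
        unfolding S_def hspace_def by auto
      have im: "Im S = 0"
      proof (cases "K = UNIV")
        case True
        have "Re (cnj \<i> * S) = 0" using polar[OF j k False, of \<i>] True unfolding S_def hspace_def by auto
        thus ?thesis by simp
      next
        case False
        hence KR: "K = \<real>" using K by auto
        have "\<forall>i<N. \<forall>l<n. F i $ l \<in> \<real>" using F unfolding KR hspace_def by auto
        hence "\<forall>i<N. Im (F i $ j) = 0 \<and> Im (F i $ k) = 0" using j k complex_is_Real_iff by blast
        thus ?thesis unfolding S_def Im_sum by simp
      qed
      have "S = 0" using re im complex_eqI by simp
      thus ?thesis using fo False j k unfolding S_def by simp
    qed
  qed (auto simp: frame_op_def)
qed

lemma delta_sq: fixes j n :: nat shows "j < n \<Longrightarrow> (\<Sum>i = 0..<n. (if i = j then (1::complex) else 0) * (if i = j then 1 else 0)) = 1"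
proof -
  assume j: "j < n"
  have "(\<Sum>i = 0..<n. (if i = j then (1::complex) else 0) * (if i = j then 1 else 0)) = (\<Sum>i = 0..<n. if i = j then (1::complex) else 0)"
    by (rule sum.cong) auto
  also have "\<dots> = 1" using j by simp
  finally show ?thesis .
qed

lemma inv_op_smult: assumes a: "a \<noteq> 0"
  shows "inv_op n (complex_of_real a \<cdot>\<^sub>m 1\<^sub>m n) = complex_of_real (1/a) \<cdot>\<^sub>m 1\<^sub>m n"
  unfolding inv_op_def
proof (rule the_equality)
  have e1: "(complex_of_real a \<cdot>\<^sub>m 1\<^sub>m n) * (complex_of_real (1/a) \<cdot>\<^sub>m 1\<^sub>m n) = 1\<^sub>m n"
    by (rule eq_matI, insert a, auto simp: scalar_prod_def delta_sq)
  have e2: "(complex_of_real (1/a) \<cdot>\<^sub>m 1\<^sub>m n) * (complex_of_real a \<cdot>\<^sub>m 1\<^sub>m n) = 1\<^sub>m n"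
    by (rule eq_matI, insert a, auto simp: scalar_prod_def delta_sq)
  show "complex_of_real (1 / a) \<cdot>\<^sub>m 1\<^sub>m n \<in> carrier_mat n n \<and>
    complex_of_real a \<cdot>\<^sub>m 1\<^sub>m n * (complex_of_real (1 / a) \<cdot>\<^sub>m 1\<^sub>m n) = 1\<^sub>m n \<and>
    complex_of_real (1 / a) \<cdot>\<^sub>m 1\<^sub>m n * (complex_of_real a \<cdot>\<^sub>m 1\<^sub>m n) = 1\<^sub>m n"
    using e1 e2 by simp
next
  fix M assume "M \<in> carrier_mat n n \<and> complex_of_real a \<cdot>\<^sub>m 1\<^sub>m n * M = 1\<^sub>m n \<and> M * (complex_of_real a \<cdot>\<^sub>m 1\<^sub>m n) = 1\<^sub>m n"
  hence M: "M \<in> carrier_mat n n" and e: "complex_of_real a \<cdot>\<^sub>m 1\<^sub>m n * M = 1\<^sub>m n" by auto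
  have e': "complex_of_real a \<cdot>\<^sub>m M = 1\<^sub>m n"
    using e M by (simp add: mult_smult_assoc_mat[of "1\<^sub>m n" n n M n])
  show "M = complex_of_real (1 / a) \<cdot>\<^sub>m 1\<^sub>m n"
  proof (rule eq_matI)
    fix j k assume "j < dim_row (complex_of_real (1 / a) \<cdot>\<^sub>m 1\<^sub>m n)" "k < dim_col (complex_of_real (1 / a) \<cdot>\<^sub>m 1\<^sub>m n)"
    hence j: "j < n" and k: "k < n" by auto
    have "(complex_of_real a \<cdot>\<^sub>m M) $$ (j,k) = 1\<^sub>m n $$ (j,k)" using e' by simp
    hence "complex_of_real a * M $$ (j,k) = (if j = k then 1 else 0)" using j k M by simp
    thus "M $$ (j, k) = (complex_of_real (1 / a) \<cdot>\<^sub>m 1\<^sub>m n) $$ (j, k)"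
      using j k a by (auto simp: field_simps)
  qed (use M in auto)
qed

lemma smult_one_mult_vec: fixes v :: "complex vec" assumes "v \<in> carrier_vec n"
  shows "(c \<cdot>\<^sub>m 1\<^sub>m n) *\<^sub>v v = c \<cdot>\<^sub>v v"
proof -
  have "(c \<cdot>\<^sub>m 1\<^sub>m n) *\<^sub>v v = c \<cdot>\<^sub>v (1\<^sub>m n *\<^sub>v v)"
    by (rule eq_vecI, insert assms, auto simp: mult_mat_vec_def scalar_prod_def sum_distrib_left mult.assoc)
  also have "1\<^sub>m n *\<^sub>v v = v" by (rule one_mult_mat_vec[OF assms])
  finally show ?thesis .
qed


lemma finsum_eq_iff: fixes N :: nat assumes f: "f \<in> carrier_vec n" and vs: "\<forall>i<N. vs i \<in> carrier_vec n"
  shows "(f = finsum_vec TYPE(complex) n vs {..<N}) \<longleftrightarrow> (\<forall>j<n. f $ j = (\<Sum>i<N. vs i $ j))"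
proof -
  have vs': "vs \<in> {..<N} \<rightarrow> carrier_vec n" using vs by auto
  have cl: "finsum_vec TYPE(complex) n vs {..<N} \<in> carrier_vec n" by (rule finsum_vec_closed[OF vs'])
  have idx: "finsum_vec TYPE(complex) n vs {..<N} $ j = (\<Sum>i<N. vs i $ j)" if "j < n" for j
    using index_finsum_vec[of "{..<N}" j n vs] that vs' by simp
  show ?thesis
  proof
    assume "f = finsum_vec TYPE(complex) n vs {..<N}"
    thus "\<forall>j<n. f $ j = (\<Sum>i<N. vs i $ j)" using idx by simp
  next
    assume "\<forall>j<n. f $ j = (\<Sum>i<N. vs i $ j)"
    thus "f = finsum_vec TYPE(complex) n vs {..<N}" using idx f cl by (intro eq_vecI) auto
  qed
qed

lemma dual_recon: fixes N :: nat assumes "\<forall>i<N. F i \<in> carrier_vec n" "\<forall>i<N. G i \<in> carrier_vec n" "f \<in> carrier_vec n"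
  shows "(f = finsum_vec TYPE(complex) n (\<lambda>i. inner f (F i) \<cdot>\<^sub>v G i) {..<N}) \<longleftrightarrow>
     (\<forall>j<n. f $ j = (\<Sum>i<N. inner f (F i) * G i $ j))"
proof -
  have "(f = finsum_vec TYPE(complex) n (\<lambda>i. inner f (F i) \<cdot>\<^sub>v G i) {..<N}) \<longleftrightarrow>
     (\<forall>j<n. f $ j = (\<Sum>i<N. (inner f (F i) \<cdot>\<^sub>v G i) $ j))"
    by (rule finsum_eq_iff, insert assms, auto)
  also have "\<dots> \<longleftrightarrow> (\<forall>j<n. f $ j = (\<Sum>i<N. inner f (F i) * G i $ j))"
  proof -
    have "(\<Sum>i<N. (inner f (F i) \<cdot>\<^sub>v G i) $ j) = (\<Sum>i<N. inner f (F i) * G i $ j)" if "j < n" for j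
      by (rule sum.cong, insert assms that, auto)
    thus ?thesis by auto
  qed
  finally show ?thesis .
qed

lemma inner_cnj: assumes "f \<in> carrier_vec n" "g \<in> carrier_vec n"
  shows "inner g f = cnj (inner f g)"
  unfolding inner_sum[OF assms(1)] inner_sum[OF assms(2)] by (simp add: mult.commute)

lemma recon_frame:
  assumes Fh: "\<forall>i<N. F i \<in> hspace K n" and Hh: "\<forall>i<N. H i \<in> hspace K n"
    and B: "B > 0" and bessel: "\<forall>f\<in>hspace K n. (\<Sum>i<N. (cmod (inner f (F i)))\<^sup>2) \<le> B * (vnorm f)\<^sup>2"
    and rec: "\<forall>f\<in>hspace K n. \<forall>j<n. f $ j = (\<Sum>i<N. inner f (H i) * F i $ j)"
  shows "is_frame K n N H"
proof -
  define B0 where "B0 = (\<Sum>i<N. (vnorm (H i))\<^sup>2) + 1"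
  have B0pos: "B0 > 0" unfolding B0_def by (simp add: sum_nonneg add_nonneg_pos)
  have main: "1/B * (vnorm f)\<^sup>2 \<le> (\<Sum>i<N. (cmod (inner f (H i)))\<^sup>2) \<and>
     (\<Sum>i<N. (cmod (inner f (H i)))\<^sup>2) \<le> B0 * (vnorm f)\<^sup>2" if fh: "f \<in> hspace K n" for f
  proof
  have fc: "f \<in> carrier_vec n" using hspace_carrier[OF fh] .
  have Fc: "F i \<in> carrier_vec n" if "i < N" for i using Fh that hspace_carrier by auto
  have Hc: "H i \<in> carrier_vec n" if "i < N" for i using Hh that hspace_carrier by auto
  define X where "X = (\<Sum>i<N. (cmod (inner f (H i)))\<^sup>2)"
  define Y where "Y = (\<Sum>i<N. (cmod (inner f (F i)))\<^sup>2)"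
  have X0: "X \<ge> 0" unfolding X_def by (simp add: sum_nonneg)
  have "X \<le> (\<Sum>i<N. (vnorm f)\<^sup>2 * (vnorm (H i))\<^sup>2)"
    unfolding X_def
  proof (rule sum_mono)
    fix i assume "i \<in> {..<N}"
    hence "cmod (inner f (H i)) \<le> vnorm f * vnorm (H i)" using CS_inner[OF fc Hc] by simp
    hence "(cmod (inner f (H i)))\<^sup>2 \<le> (vnorm f * vnorm (H i))\<^sup>2" by (rule power_mono, simp)
    thus "(cmod (inner f (H i)))\<^sup>2 \<le> (vnorm f)\<^sup>2 * (vnorm (H i))\<^sup>2" by (simp add: power_mult_distrib)
  qed
  also have "\<dots> \<le> B0 * (vnorm f)\<^sup>2"
    unfolding B0_def by (simp add: sum_distrib_left[symmetric] algebra_simps)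
  finally show "(\<Sum>i<N. (cmod (inner f (H i)))\<^sup>2) \<le> B0 * (vnorm f)\<^sup>2" unfolding X_def .
  have "complex_of_real ((vnorm f)\<^sup>2) = (\<Sum>j<n. f $ j * cnj (f $ j))"
    using inner_self[OF fc] inner_sum[OF fc] by simp
  also have "\<dots> = (\<Sum>j<n. (\<Sum>i<N. inner f (H i) * F i $ j) * cnj (f $ j))"
    using rec fh by simp
  also have "\<dots> = (\<Sum>i<N. inner f (H i) * (\<Sum>j<n. F i $ j * cnj (f $ j)))"
    by (simp add: sum_distrib_left sum_distrib_right mult.assoc sum.swap[of _ "{..<n}"])
  also have "\<dots> = (\<Sum>i<N. inner f (H i) * cnj (inner f (F i)))"
    by (rule sum.cong[OF refl], simp add: inner_sum[OF fc, symmetric] inner_cnj[OF fc Fc])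
  finally have eqv: "complex_of_real ((vnorm f)\<^sup>2) = (\<Sum>i<N. inner f (H i) * cnj (inner f (F i)))" .
  have "(vnorm f)\<^sup>2 = cmod (complex_of_real ((vnorm f)\<^sup>2))" unfolding norm_of_real by simp
  also have "\<dots> \<le> (\<Sum>i<N. cmod (inner f (H i)) * cmod (inner f (F i)))"
    unfolding eqv by (rule order_trans[OF norm_sum], simp add: norm_mult)
  also have "\<dots> \<le> sqrt X * sqrt Y" unfolding X_def Y_def by (rule real_CS_sqrt)
  also have "\<dots> \<le> sqrt X * sqrt (B * (vnorm f)\<^sup>2)"
    using bessel fh X0 unfolding Y_def by (intro mult_left_mono) auto
  also have "\<dots> = sqrt X * sqrt B * vnorm f" using vnorm_nonneg[of f] by (simp add: real_sqrt_mult)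
  finally have ineq: "(vnorm f)\<^sup>2 \<le> sqrt X * sqrt B * vnorm f" .
  have lowX: "1 / B * (vnorm f)\<^sup>2 \<le> X"
  proof (cases "vnorm f = 0")
    case True thus ?thesis using X0 by simp
  next
    case False
    hence pos: "vnorm f > 0" using vnorm_nonneg[of f] by simp
    hence "vnorm f \<le> sqrt X * sqrt B" using ineq by (simp add: power2_eq_square)
    hence "(vnorm f)\<^sup>2 \<le> (sqrt X * sqrt B)\<^sup>2" using power_mono[of "vnorm f" "sqrt X * sqrt B" 2] pos by simp
    also have "\<dots> = X * B" using X0 B by (simp add: power_mult_distrib)
    finally show ?thesis using B by (simp add: field_simps)
  qed
  show "1 / B * (vnorm f)\<^sup>2 \<le> (\<Sum>i<N. (cmod (inner f (H i)))\<^sup>2)"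
    using lowX unfolding X_def .
  qed
  show ?thesis unfolding is_frame_def
    apply (rule conjI[OF Hh])
    apply (rule exI[of _ "1/B"], rule exI[of _ B0])
    using B B0pos main by auto
qed


lemma dual_char: fixes N :: nat
  assumes Fh: "\<forall>i<N. F i \<in> hspace K n" and Gh: "\<forall>i<N. G i \<in> hspace K n"
  shows "is_dual K n N F G \<longleftrightarrow> is_frame K n N G \<and> (\<forall>f\<in>hspace K n.
     (\<forall>j<n. f $ j = (\<Sum>i<N. inner f (F i) * G i $ j)) \<and> (\<forall>j<n. f $ j = (\<Sum>i<N. inner f (G i) * F i $ j)))"
proof -
  have Fc: "\<forall>i<N. F i \<in> carrier_vec n" using Fh hspace_carrier by auto
  have Gc: "\<forall>i<N. G i \<in> carrier_vec n" using Gh hspace_carrier by auto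
  show ?thesis unfolding is_dual_def
    using dual_recon[OF Fc Gc] dual_recon[OF Gc Fc] hspace_carrier by blast
qed

lemma dual_hspace: "is_dual K n N F G \<Longrightarrow> \<forall>i<N. G i \<in> hspace K n"
  unfolding is_dual_def is_frame_def by blast

lemma hspace_comb: assumes K: "K = \<real> \<or> K = UNIV" and u: "u \<in> hspace K n" and w: "w \<in> hspace K n"
  shows "complex_of_real a \<cdot>\<^sub>v u + complex_of_real b \<cdot>\<^sub>v w \<in> hspace K n"
  using K u w unfolding hspace_def by auto

lemma inner_comb: assumes f: "f \<in> carrier_vec n" and u: "u \<in> carrier_vec n" and w: "w \<in> carrier_vec n"
  shows "inner f (complex_of_real a \<cdot>\<^sub>v u + complex_of_real b \<cdot>\<^sub>v w) = complex_of_real a * inner f u + complex_of_real b * inner f w"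
proof -
  have c: "complex_of_real a \<cdot>\<^sub>v u + complex_of_real b \<cdot>\<^sub>v w \<in> carrier_vec n" using u w by simp
  show ?thesis unfolding inner_sum[OF c] inner_sum[OF u] inner_sum[OF w] using u w
    by (simp add: sum.distrib sum_distrib_left algebra_simps)
qed

lemma lin_comb_sum: fixes a x y :: "nat \<Rightarrow> complex"
  shows "(\<Sum>i<N. a i * (c1 * x i + c2 * y i)) = c1 * (\<Sum>i<N. a i * x i) + c2 * (\<Sum>i<N. a i * y i)"
  by (simp add: sum.distrib sum_distrib_left algebra_simps)

lemma lin_comb_sum2: fixes a x y :: "nat \<Rightarrow> complex"
  shows "(\<Sum>i<N. (c1 * x i + c2 * y i) * a i) = c1 * (\<Sum>i<N. x i * a i) + c2 * (\<Sum>i<N. y i * a i)"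
  by (simp add: sum.distrib sum_distrib_left algebra_simps)

lemma dual_comb:
  fixes N :: nat and t :: real
  assumes K: "K = \<real> \<or> K = UNIV" and Fh: "\<forall>i<N. F i \<in> hspace K n" and B: "B > 0"
    and bessel: "\<forall>f\<in>hspace K n. (\<Sum>i<N. (cmod (inner f (F i)))\<^sup>2) \<le> B * (vnorm f)\<^sup>2"
    and dC: "is_dual K n N F C" and dG: "is_dual K n N F G"
  shows "is_dual K n N F (\<lambda>i. complex_of_real (1-t) \<cdot>\<^sub>v C i + complex_of_real t \<cdot>\<^sub>v G i)"
proof -
  define H where "H = (\<lambda>i. complex_of_real (1-t) \<cdot>\<^sub>v C i + complex_of_real t \<cdot>\<^sub>v G i)"
  have Ch: "\<forall>i<N. C i \<in> hspace K n" using dual_hspace[OF dC] .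
  have Gh: "\<forall>i<N. G i \<in> hspace K n" using dual_hspace[OF dG] .
  have Hh: "\<forall>i<N. H i \<in> hspace K n"
  proof (intro allI impI)
    fix i assume "i < N"
    thus "H i \<in> hspace K n" unfolding H_def by (intro hspace_comb[OF K]) (use Ch Gh in auto)
  qed
  have Cc: "C i \<in> carrier_vec n" and Gc: "G i \<in> carrier_vec n" if "i < N" for i
    using Ch Gh that hspace_carrier by auto
  have Hidx: "H i $ j = complex_of_real (1-t) * C i $ j + complex_of_real t * G i $ j" if "i < N" "j < n" for i j
    unfolding H_def using Cc[OF that(1)] Gc[OF that(1)] that(2) by simp
  have Hin: "inner f (H i) = complex_of_real (1-t) * inner f (C i) + complex_of_real t * inner f (G i)"
    if "i < N" "f \<in> carrier_vec n" for i f
    unfolding H_def by (rule inner_comb[OF that(2) Cc[OF that(1)] Gc[OF that(1)]])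
  note dCc = dC[unfolded dual_char[OF Fh Ch]] and dGc = dG[unfolded dual_char[OF Fh Gh]]
  have rec1: "f $ j = (\<Sum>i<N. inner f (F i) * H i $ j)" if f: "f \<in> hspace K n" and j: "j < n" for f j
  proof -
    have "(\<Sum>i<N. inner f (F i) * H i $ j) =
      complex_of_real (1-t) * (\<Sum>i<N. inner f (F i) * C i $ j) + complex_of_real t * (\<Sum>i<N. inner f (F i) * G i $ j)"
      unfolding lin_comb_sum[symmetric] by (rule sum.cong, auto simp: Hidx j)
    also have "\<dots> = complex_of_real (1-t) * f $ j + complex_of_real t * f $ j"
    proof -
      have c1: "f $ j = (\<Sum>i<N. inner f (F i) * C i $ j)" using dCc f j by blast
      have g1: "f $ j = (\<Sum>i<N. inner f (F i) * G i $ j)" using dGc f j by blast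
      show ?thesis by (simp only: c1[symmetric] g1[symmetric])
    qed
    also have "\<dots> = (complex_of_real (1-t) + complex_of_real t) * f $ j" by (simp only: distrib_right)
    also have "\<dots> = f $ j" by simp
    finally show ?thesis by simp
  qed
  have rec2: "f $ j = (\<Sum>i<N. inner f (H i) * F i $ j)" if f: "f \<in> hspace K n" and j: "j < n" for f j
  proof -
    have fc: "f \<in> carrier_vec n" using hspace_carrier[OF f] .
    have "(\<Sum>i<N. inner f (H i) * F i $ j) =
      complex_of_real (1-t) * (\<Sum>i<N. inner f (C i) * F i $ j) + complex_of_real t * (\<Sum>i<N. inner f (G i) * F i $ j)"
      unfolding lin_comb_sum2[symmetric] by (rule sum.cong, auto simp: Hin fc)
    also have "\<dots> = complex_of_real (1-t) * f $ j + complex_of_real t * f $ j"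
    proof -
      have c1: "f $ j = (\<Sum>i<N. inner f (C i) * F i $ j)" using dCc f j by blast
      have g1: "f $ j = (\<Sum>i<N. inner f (G i) * F i $ j)" using dGc f j by blast
      show ?thesis by (simp only: c1[symmetric] g1[symmetric])
    qed
    also have "\<dots> = (complex_of_real (1-t) + complex_of_real t) * f $ j" by (simp only: distrib_right)
    also have "\<dots> = f $ j" by simp
    finally show ?thesis by simp
  qed
  have fr: "is_frame K n N H" by (rule recon_frame[OF Fh Hh B bessel], use rec2 in auto)
  show ?thesis unfolding H_def[symmetric] dual_char[OF Fh Hh] using fr rec1 rec2 by auto
qed


lemma vnorm_comb: assumes c: "c \<in> carrier_vec n" and g: "g \<in> carrier_vec n"
  shows "vnorm (complex_of_real (1-t) \<cdot>\<^sub>v c + complex_of_real t \<cdot>\<^sub>v g) =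
    sqrt (\<Sum>j<n. (cmod (complex_of_real (1-t) * c $ j + complex_of_real t * g $ j))\<^sup>2)"
  unfolding vnorm_def using c g by simp

lemma cont_part: assumes c: "c \<in> carrier_vec n" and g: "g \<in> carrier_vec n"
  and lt: "q * vnorm c * vF < M"
  shows "eventually (\<lambda>t. q * vnorm (complex_of_real (1-t) \<cdot>\<^sub>v c + complex_of_real t \<cdot>\<^sub>v g) * vF < M) (at_right (0::real))"
proof -
  define \<phi> where "\<phi> = (\<lambda>t::real. q * sqrt (\<Sum>j<n. (cmod (complex_of_real (1-t) * c $ j + complex_of_real t * g $ j))\<^sup>2) * vF)"
  have "(\<phi> \<longlongrightarrow> \<phi> 0) (at_right 0)" unfolding \<phi>_def
    by (intro tendsto_intros)
  moreover have "\<phi> 0 = q * vnorm c * vF" unfolding \<phi>_def vnorm_def using c by simp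
  ultimately have "eventually (\<lambda>t. \<phi> t < M) (at_right 0)" using lt order_tendstoD(2) by metis
  thus ?thesis unfolding \<phi>_def vnorm_comb[OF c g] .
qed

lemma local_decrease: assumes c: "c \<in> carrier_vec n" and g: "g \<in> carrier_vec n"
  and xneg: "Re (inner g c) < (vnorm c)\<^sup>2"
  shows "eventually (\<lambda>t. vnorm (complex_of_real (1-t) \<cdot>\<^sub>v c + complex_of_real t \<cdot>\<^sub>v g) < vnorm c) (at_right (0::real))"
proof -
  define x where "x = Re (inner g c) - (vnorm c)\<^sup>2"
  define H where "H = (\<Sum>j<n. (cmod (g $ j - c $ j))\<^sup>2)"
  have x: "x < 0" unfolding x_def using xneg by simp
  have H: "H \<ge> 0" unfolding H_def by (simp add: sum_nonneg)
  have expand: "(vnorm (complex_of_real (1-t) \<cdot>\<^sub>v c + complex_of_real t \<cdot>\<^sub>v g))\<^sup>2 = (vnorm c)\<^sup>2 + 2 * t * x + t\<^sup>2 * H" for t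
  proof -
    have "(vnorm (complex_of_real (1-t) \<cdot>\<^sub>v c + complex_of_real t \<cdot>\<^sub>v g))\<^sup>2 =
       (\<Sum>j<n. (cmod (c $ j + complex_of_real t * (g $ j - c $ j)))\<^sup>2)"
    proof -
      have "(vnorm (complex_of_real (1-t) \<cdot>\<^sub>v c + complex_of_real t \<cdot>\<^sub>v g))\<^sup>2 =
        (\<Sum>j<n. (cmod (complex_of_real (1-t) * c $ j + complex_of_real t * g $ j))\<^sup>2)"
        unfolding vnorm_comb[OF c g] by (simp add: sum_nonneg)
      also have "\<dots> = (\<Sum>j<n. (cmod (c $ j + complex_of_real t * (g $ j - c $ j)))\<^sup>2)"
        by (rule sum.cong[OF refl], simp add: algebra_simps)
      finally show ?thesis .
    qed
    also have "\<dots> = (\<Sum>j<n. (cmod (c $ j))\<^sup>2 + t\<^sup>2 * (cmod (g $ j - c $ j))\<^sup>2 + 2 * t * Re ((g $ j - c $ j) * cnj (c $ j)))"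
    proof (rule sum.cong[OF refl])
      fix j
      have "Re (c $ j * cnj (complex_of_real t * (g $ j - c $ j))) = t * Re ((g $ j - c $ j) * cnj (c $ j))"
        by (simp add: algebra_simps)
      thus "(cmod (c $ j + complex_of_real t * (g $ j - c $ j)))\<^sup>2 =
        (cmod (c $ j))\<^sup>2 + t\<^sup>2 * (cmod (g $ j - c $ j))\<^sup>2 + 2 * t * Re ((g $ j - c $ j) * cnj (c $ j))"
        unfolding cmod_add_sq by (simp add: norm_mult power_mult_distrib)
    qed
    also have "\<dots> = (\<Sum>j<n. (cmod (c $ j))\<^sup>2) + t\<^sup>2 * H + 2 * t * (\<Sum>j<n. Re ((g $ j - c $ j) * cnj (c $ j)))"
      unfolding H_def by (simp only: sum.distrib sum_distrib_left)
    also have "(\<Sum>j<n. Re ((g $ j - c $ j) * cnj (c $ j))) = x"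
    proof -
      have "(\<Sum>j<n. (g $ j - c $ j) * cnj (c $ j)) = inner g c - inner c c"
        unfolding inner_sum[OF c] by (simp add: algebra_simps sum_subtractf)
      hence "Re (\<Sum>j<n. (g $ j - c $ j) * cnj (c $ j)) = x" unfolding x_def inner_self[OF c] by simp
      thus ?thesis by (simp only: Re_sum)
    qed
    also have "(\<Sum>j<n. (cmod (c $ j))\<^sup>2) = (vnorm c)\<^sup>2" by (rule vnorm_sq[OF c, symmetric])
    finally show ?thesis by simp
  qed
  define b where "b = - x / (H + 1)"
  have b: "b > 0" unfolding b_def using x H by (simp add: divide_neg_pos)
  have "\<forall>t>0. t < b \<longrightarrow> vnorm (complex_of_real (1-t) \<cdot>\<^sub>v c + complex_of_real t \<cdot>\<^sub>v g) < vnorm c"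
  proof (intro allI impI)
    fix t :: real assume t0: "t > 0" and tb: "t < b"
    have "t * (H + 1) < - x" using tb H unfolding b_def by (simp add: field_simps)
    hence "t * H < - x" using t0 by (simp add: algebra_simps)
    hence "2 * x + t * H < x" by simp
    hence "t * (2 * x + t * H) < t * x" using t0 by simp
    also have "\<dots> < 0" using t0 x by (simp add: mult_pos_neg)
    finally have "2 * t * x + t\<^sup>2 * H < 0" by (simp add: power2_eq_square algebra_simps)
    hence "(vnorm (complex_of_real (1-t) \<cdot>\<^sub>v c + complex_of_real t \<cdot>\<^sub>v g))\<^sup>2 < (vnorm c)\<^sup>2"
      unfolding expand by simp
    thus "vnorm (complex_of_real (1-t) \<cdot>\<^sub>v c + complex_of_real t \<cdot>\<^sub>v g) < vnorm c"
      using vnorm_nonneg[of c] by (rule power2_less_imp_less)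
  qed
  thus ?thesis unfolding eventually_at_right_field using b by blast
qed


lemma err_R1: assumes "G i \<in> carrier_vec n"
  shows "err_op n N p {i} F G = R1 n (complex_of_real (weight n N p i) \<cdot>\<^sub>v G i) (F i)"
  unfolding err_op_def R1_def using assms by (intro eq_matI) auto

lemma card1_image: "{X \<Lambda> | \<Lambda>. \<Lambda> \<subseteq> {..<(N::nat)} \<and> card \<Lambda> = 1} = (\<lambda>i. X {i}) ` {..<N}"
proof
  show "{X \<Lambda> | \<Lambda>. \<Lambda> \<subseteq> {..<N} \<and> card \<Lambda> = 1} \<subseteq> (\<lambda>i. X {i}) ` {..<N}"
  proof
    fix y assume "y \<in> {X \<Lambda> | \<Lambda>. \<Lambda> \<subseteq> {..<N} \<and> card \<Lambda> = 1}"
    then obtain \<Lambda> where L: "\<Lambda> \<subseteq> {..<N}" "card \<Lambda> = 1" and y: "y = X \<Lambda>" by blast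
    from L(2) obtain i where "\<Lambda> = {i}" by (auto simp: card_1_singleton_iff)
    thus "y \<in> (\<lambda>i. X {i}) ` {..<N}" using L y by auto
  qed
next
  show "(\<lambda>i. X {i}) ` {..<N} \<subseteq> {X \<Lambda> | \<Lambda>. \<Lambda> \<subseteq> {..<N} \<and> card \<Lambda> = 1}"
    by force
qed

lemma Max_img_mono: fixes f g :: "nat \<Rightarrow> real"
  assumes "(N::nat) > 0" "\<And>i. i < N \<Longrightarrow> f i \<le> g i"
  shows "Max (f ` {..<N}) \<le> Max (g ` {..<N})"
proof -
  have ne: "{..<N} \<noteq> {}" using assms(1) by auto
  show ?thesis
  proof (rule Max.boundedI)
    show "finite (f ` {..<N})" by simp
    show "f ` {..<N} \<noteq> {}" using ne by simp
    fix y assume "y \<in> f ` {..<N}"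
    then obtain i where i: "i < N" and y: "y = f i" by auto
    have "g i \<le> Max (g ` {..<N})" using i by (intro Max_ge) auto
    thus "y \<le> Max (g ` {..<N})" using assms(2)[OF i] y by simp
  qed
qed

lemma vnorm_unit: "j < n \<Longrightarrow> vnorm (unit_vec n j) = 1"
proof -
  assume j: "j < n"
  have "complex_of_real ((vnorm (unit_vec n j))\<^sup>2) = 1"
    using inner_self[of "unit_vec n j" n] inner_unit_left[of "unit_vec n j" n j] j by simp
  hence "(vnorm (unit_vec n j))\<^sup>2 = 1" by (metis of_real_eq_1_iff)
  thus ?thesis using vnorm_nonneg[of "unit_vec n j"] by (simp add: power2_eq_1_iff)
qed

lemma inner_smult_right: assumes "g \<in> carrier_vec n"
  shows "inner f (complex_of_real a \<cdot>\<^sub>v g) = complex_of_real a * inner f g"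
proof -
  have c: "complex_of_real a \<cdot>\<^sub>v g \<in> carrier_vec n" using assms by simp
  show ?thesis unfolding inner_sum[OF c] inner_sum[OF assms] using assms
    by (simp add: sum_distrib_left algebra_simps)
qed


theorem theorem3p4:
  fixes K :: "complex set" and n N :: nat and F :: "nat \<Rightarrow> complex vec" and p :: "nat \<Rightarrow> real"
  assumes "K = \<real> \<or> K = UNIV"
    and "n \<ge> 1"
    and "is_tight_frame K n N F"
    and "prob_seq N p"
  shows "is_1_erasure_POD K n N p F (canonical_dual n N F) \<longleftrightarrow>
         canonical_dual n N F \<in> Delta1 K n N p F"
proof -
  have K: "K = \<real> \<or> K = UNIV" using assms(1) .
  have n0: "0 < n" using assms(2) by simp
  from assms(3) obtain A where A: "A > 0" and Fh: "\<forall>i<N. F i \<in> hspace K n"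
    and eq: "\<And>f. f \<in> hspace K n \<Longrightarrow> (\<Sum>i<N. (cmod (inner f (F i)))\<^sup>2) = A * (vnorm f)\<^sup>2"
    using tight_eq[OF assms(3)] by metis
  have bessel: "\<forall>f\<in>hspace K n. (\<Sum>i<N. (cmod (inner f (F i)))\<^sup>2) \<le> A * (vnorm f)\<^sup>2"
    using eq by simp
  have N0: "N > 0"
  proof (rule ccontr)
    assume "\<not> N > 0" hence N: "N = 0" by simp
    have "A * (vnorm (unit_vec n 0))\<^sup>2 = 0" using eq[OF unit_hspace[OF K n0]] N by simp
    thus False using A vnorm_unit[OF n0] by simp
  qed
  have Fc: "F i \<in> carrier_vec n" if "i < N" for i using Fh that hspace_carrier by auto
  define q where "q = weight n N p"
  have q0: "q i \<ge> 0" if i: "i < N" for i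
  proof -
    have "p i \<le> 1" "(\<Sum>j<N. p j) = 1" using assms(4) i unfolding prob_seq_def by auto
    moreover have "real N - 1 \<ge> 0" using i by simp
    ultimately show ?thesis unfolding q_def weight_def
      by (intro mult_nonneg_nonneg divide_nonneg_nonneg) auto
  qed
  define C where "C = canonical_dual n N F"
  have Cdef: "C i = complex_of_real (1/A) \<cdot>\<^sub>v F i" if i: "i < N" for i
  proof -
    have S: "frame_op n N F = complex_of_real A \<cdot>\<^sub>m 1\<^sub>m n" by (rule frame_op_tight[OF K A Fh eq])
    have I: "inv_op n (complex_of_real A \<cdot>\<^sub>m 1\<^sub>m n) = complex_of_real (1/A) \<cdot>\<^sub>m 1\<^sub>m n"
      by (rule inv_op_smult, use A in simp)
    have "C i = inv_op n (frame_op n N F) *\<^sub>v F i" unfolding C_def canonical_dual_def by simp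
    also have "\<dots> = complex_of_real (1/A) \<cdot>\<^sub>v F i" unfolding S I by (rule smult_one_mult_vec[OF Fc[OF i]])
    finally show ?thesis .
  qed
  have Ch: "\<forall>i<N. C i \<in> hspace K n"
  proof (intro allI impI)
    fix i assume i: "i < N"
    show "C i \<in> hspace K n" unfolding Cdef[OF i] by (rule hspace_smult_real[OF K]) (use Fh i in auto)
  qed
  have Cc: "C i \<in> carrier_vec n" if "i < N" for i using Ch that hspace_carrier by auto
  have FC: "F i = complex_of_real A \<cdot>\<^sub>v C i" if i: "i < N" for i
    using Cdef[OF i] Fc[OF i] A by (intro eq_vecI) auto
  define Nv where "Nv G i = q i * vnorm (G i) * vnorm (F i)" for G i
  define Rh where "Rh G i = spectral_radius (err_op n N p {i} F G)" for G i
  have opn: "op_norm K n (err_op n N p {i} F G) = Nv G i" if i: "i < N" and Gi: "G i \<in> hspace K n" for G i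
  proof -
    have "op_norm K n (err_op n N p {i} F G) = vnorm (complex_of_real (q i) \<cdot>\<^sub>v G i) * vnorm (F i)"
      unfolding err_R1[where G=G and i=i, OF hspace_carrier[OF Gi]] q_def[symmetric]
      by (rule op_norm_R1[OF K hspace_smult_real[OF K Gi]], use Fh i in auto)
    thus ?thesis unfolding Nv_def vnorm_smult[OF hspace_carrier[OF Gi]] using q0[OF i] by simp
  qed
  have spec: "q i * cmod (inner (G i) (F i)) \<le> Rh G i \<and> Rh G i \<le> Nv G i"
    if i: "i < N" and Gi: "G i \<in> hspace K n" for G i
  proof -
    have Gc: "G i \<in> carrier_vec n" using hspace_carrier[OF Gi] .
    have uc: "complex_of_real (q i) \<cdot>\<^sub>v G i \<in> carrier_vec n" using Gc by simp
    have R: "Rh G i = spectral_radius (R1 n (complex_of_real (q i) \<cdot>\<^sub>v G i) (F i))"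
      unfolding Rh_def err_R1[where G=G and i=i, OF Gc] q_def ..
    have "cmod (inner (complex_of_real (q i) \<cdot>\<^sub>v G i) (F i)) = q i * cmod (inner (G i) (F i))"
      unfolding inner_smult_left[OF Fc[OF i] Gc] using q0[OF i] by (simp add: norm_mult)
    moreover have "vnorm (complex_of_real (q i) \<cdot>\<^sub>v G i) * vnorm (F i) = Nv G i"
      unfolding Nv_def vnorm_smult[OF Gc] using q0[OF i] by simp
    ultimately show ?thesis using spec_R1[OF uc Fc[OF i] n0] R by simp
  qed
  have O1eq: "O1 K n N p F G = Max ((\<lambda>i. Nv G i) ` {..<N})" if dG: "is_dual K n N F G" for G
  proof -
    have Gh: "\<forall>i<N. G i \<in> hspace K n" using dual_hspace[OF dG] .
    show ?thesis unfolding O1_def card1_image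
      by (rule arg_cong[where f = Max], rule image_cong[OF refl], use opn Gh in auto)
  qed
  have A1eq: "A1 K n N p F G = Max ((\<lambda>i. (Nv G i + Rh G i) / 2) ` {..<N})" if dG: "is_dual K n N F G" for G
  proof -
    have Gh: "\<forall>i<N. G i \<in> hspace K n" using dual_hspace[OF dG] .
    show ?thesis unfolding A1_def card1_image
      by (rule arg_cong[where f = Max], rule image_cong[OF refl], use opn Gh in \<open>auto simp: Rh_def\<close>)
  qed
  have A1leO1: "A1 K n N p F G \<le> O1 K n N p F G" if dG: "is_dual K n N F G" for G
  proof -
    have Gh: "\<forall>i<N. G i \<in> hspace K n" using dual_hspace[OF dG] .
    show ?thesis unfolding A1eq[OF dG] O1eq[OF dG]
      by (rule Max_img_mono[OF N0], use spec Gh in force)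
  qed
  have RhC: "Rh C i = Nv C i" if i: "i < N" for i
  proof -
    have e: "inner (C i) (F i) = complex_of_real (A * (vnorm (C i))\<^sup>2)"
      unfolding FC[OF i] inner_smult_right[OF Cc[OF i]] inner_self[OF Cc[OF i]] by simp
    have "cmod (inner (C i) (F i)) = A * (vnorm (C i))\<^sup>2" by (simp only: e norm_of_real) (use A in simp)
    hence "q i * cmod (inner (C i) (F i)) = q i * A * (vnorm (C i))\<^sup>2" by simp
    also have "\<dots> = Nv C i" unfolding Nv_def FC[OF i] vnorm_smult[OF Cc[OF i]] using A
      by (simp add: power2_eq_square mult_ac)
    finally show ?thesis using spec[OF i] Ch i by force
  qed
  have A1C: "A1 K n N p F C = O1 K n N p F C" if dC: "is_dual K n N F C"
    unfolding A1eq[OF dC] O1eq[OF dC]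
    by (rule arg_cong[where f = Max], rule image_cong[OF refl], simp add: RhC)
  show ?thesis unfolding C_def[symmetric]
  proof
    assume "is_1_erasure_POD K n N p F C"
    hence dC: "is_dual K n N F C" and minO: "\<And>G'. is_dual K n N F G' \<Longrightarrow> O1 K n N p F C \<le> O1 K n N p F G'"
      unfolding is_1_erasure_POD_def by auto
    show "C \<in> Delta1 K n N p F"
      unfolding Delta1_def
    proof (intro CollectI conjI allI impI dC)
      fix G assume dG: "is_dual K n N F G"
      show "A1 K n N p F C \<le> A1 K n N p F G"
      proof (rule ccontr)
        assume "\<not> A1 K n N p F C \<le> A1 K n N p F G"
        hence lt: "A1 K n N p F G < A1 K n N p F C" by simp
        define M where "M = O1 K n N p F C"
        have ltM: "A1 K n N p F G < M" using lt A1C[OF dC] M_def by simp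
        have Gh: "\<forall>i<N. G i \<in> hspace K n" using dual_hspace[OF dG] .
        have Gc: "G i \<in> carrier_vec n" if "i < N" for i using Gh that hspace_carrier by auto
        have termG: "(Nv G i + Rh G i) / 2 < M" if i: "i < N" for i
        proof -
          have "(Nv G i + Rh G i) / 2 \<le> A1 K n N p F G"
            unfolding A1eq[OF dG] using i by (intro Max_ge) auto
          thus ?thesis using ltM by simp
        qed
        have NvC_le: "Nv C i \<le> M" if i: "i < N" for i
          unfolding M_def O1eq[OF dC] using i by (intro Max_ge) auto
        define Gt where "Gt t = (\<lambda>i. complex_of_real (1-t) \<cdot>\<^sub>v C i + complex_of_real t \<cdot>\<^sub>v G i)" for t
        have dGt: "is_dual K n N F (Gt t)" for t
          unfolding Gt_def by (rule dual_comb[OF K Fh A bessel dC dG])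
        have ev: "\<forall>i\<in>{..<N}. eventually (\<lambda>t. Nv (Gt t) i < M) (at_right 0)"
        proof
          fix i assume "i \<in> {..<N}" hence i: "i < N" by simp
          show "eventually (\<lambda>t. Nv (Gt t) i < M) (at_right 0)"
          proof (cases "Nv C i < M")
            case True
            thus ?thesis unfolding Nv_def Gt_def using cont_part[OF Cc[OF i] Gc[OF i], of "q i" "vnorm (F i)" M] by simp
          next
            case False
            hence eqM: "Nv C i = M" using NvC_le[OF i] by simp
            have sp: "q i * cmod (inner (G i) (F i)) \<le> Rh G i" "Rh G i \<le> Nv G i" using spec[OF i] Gh i by auto
            have cs: "q i * cmod (inner (G i) (F i)) \<le> Nv G i"
              unfolding Nv_def using CS_inner[OF Gc[OF i] Fc[OF i]] q0[OF i]
              by (simp add: mult.assoc mult_left_mono)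
            have qc0: "q i * cmod (inner (G i) (F i)) \<ge> 0" using q0[OF i] by simp
            have qcM: "q i * cmod (inner (G i) (F i)) < M" using termG[OF i] sp cs by simp
            hence Mpos: "M > 0" using qc0 by simp
            have vF: "vnorm (F i) = A * vnorm (C i)" unfolding FC[OF i] vnorm_smult[OF Cc[OF i]] using A by simp
            have MC: "M = q i * A * (vnorm (C i))\<^sup>2" unfolding eqM[symmetric] Nv_def vF
              by (simp add: power2_eq_square mult_ac)
            have qA: "q i * A > 0"
            proof -
              have "q i \<noteq> 0" using MC Mpos by auto
              thus ?thesis using q0[OF i] A by simp
            qed
            have "cmod (inner (G i) (F i)) = A * cmod (inner (G i) (C i))"
              unfolding FC[OF i] inner_smult_right[OF Cc[OF i]] using A by (simp add: norm_mult)
            hence "q i * A * cmod (inner (G i) (C i)) < q i * A * (vnorm (C i))\<^sup>2"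
              using qcM MC by (simp add: mult_ac)
            hence "cmod (inner (G i) (C i)) < (vnorm (C i))\<^sup>2" using qA by (metis mult_less_cancel_left_pos)
            hence key: "Re (inner (G i) (C i)) < (vnorm (C i))\<^sup>2"
              using complex_Re_le_cmod[of "inner (G i) (C i)"] by linarith
            have qF: "q i * vnorm (F i) > 0"
            proof -
              have "vnorm (C i) \<noteq> 0" using MC Mpos by auto
              hence "vnorm (C i) > 0" using vnorm_nonneg[of "C i"] by simp
              thus ?thesis unfolding vF using qA by (simp add: mult.assoc[symmetric])
            qed
            show ?thesis
            proof (rule eventually_mono[OF local_decrease[OF Cc[OF i] Gc[OF i] key]])
              fix t assume "vnorm (complex_of_real (1 - t) \<cdot>\<^sub>v C i + complex_of_real t \<cdot>\<^sub>v G i) < vnorm (C i)"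
              hence "q i * vnorm (F i) * vnorm (Gt t i) < q i * vnorm (F i) * vnorm (C i)"
                unfolding Gt_def by (rule mult_strict_left_mono[OF _ qF])
              thus "Nv (Gt t) i < M" unfolding eqM[symmetric] Nv_def by (simp add: mult_ac)
            qed
          qed
        qed
        have "eventually (\<lambda>t. \<forall>i\<in>{..<N}. Nv (Gt t) i < M) (at_right 0)"
          by (rule eventually_ball_finite[OF finite_lessThan ev])
        then obtain b :: real where b: "b > 0" and P: "\<forall>y>0. y < b \<longrightarrow> (\<forall>i\<in>{..<N}. Nv (Gt y) i < M)"
          unfolding eventually_at_right_field by blast
        define t where "t = b / 2"
        have all: "\<forall>i\<in>{..<N}. Nv (Gt t) i < M" using P b unfolding t_def by simp
        have "O1 K n N p F (Gt t) < M" unfolding O1eq[OF dGt] using all N0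
          by (subst Max_less_iff) auto
        moreover have "M \<le> O1 K n N p F (Gt t)" unfolding M_def by (rule minO[OF dGt])
        ultimately show False by simp
      qed
    qed
  next
    assume "C \<in> Delta1 K n N p F"
    hence dC: "is_dual K n N F C" and minA: "\<And>G'. is_dual K n N F G' \<Longrightarrow> A1 K n N p F C \<le> A1 K n N p F G'"
      unfolding Delta1_def by auto
    show "is_1_erasure_POD K n N p F C"
      unfolding is_1_erasure_POD_def
    proof (intro conjI allI impI dC)
      fix G assume dG: "is_dual K n N F G"
      have "O1 K n N p F C = A1 K n N p F C" using A1C[OF dC] by simp
      also have "\<dots> \<le> A1 K n N p F G" by (rule minA[OF dG])
      also have "\<dots> \<le> O1 K n N p F G" by (rule A1leO1[OF dG])
      finally show "O1 K n N p F C \<le> O1 K n N p F G" .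
    qed
  qed
qed

end
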